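(* Let $X$ be a finite, simple, connected $3$-valent plane graph such that the number of edges surrounding each face is divisible by $3$. Then $V(X)$ admits a coloring by two colors, black and white, such that: (C-i) every black vertex is adjacent to three white vertices; (C-ii) every white vertex is adjacent to exactly one black vertex (so its other two neighbours are white); (C-iii) for any pair of black vertices $x,y$ at graph distance $3$ from each other, there is a path from $x$ to $y$ of length $3$ which either turns left at both of its interior vertices or turns right at both of its interior vertices.
   Context: In a $3$-valent plane graph, a path $\dots,u,v,w,\dots$ arriving at $v$ along the edge $uv$ and leaving along the edge $vw\neq uv$ turns right (resp. left) at $v$ according as $vw$ is the edge following $uv$ in the clockwise (resp. counterclockwise) order of the three edges around $v$ determined by the plane embedding. *)

theory Defs
  imports Main
begin

text \<open>A 3-valent plane graph is encoded combinatorially: a finite vertex set V,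
a symmetric irreflexive adjacency relation E, and a rotation system rho, where
rho v u is the neighbour of v following u in the CLOCKWISE order of the three
edges around v given by the plane embedding.  Planarity is the genus-0
condition (Euler's formula V - E + F = 2) for the faces traced by the rotation
system.\<close>

definition nbrs :: "('v \<Rightarrow> 'v \<Rightarrow> bool) \<Rightarrow> 'v \<Rightarrow> 'v set" where
  "nbrs E v = {u. E v u}"

definition darts :: "('v \<Rightarrow> 'v \<Rightarrow> bool) \<Rightarrow> ('v \<times> 'v) set" where
  "darts E = {(u, v). E u v}"

definition face_step :: "('v \<Rightarrow> 'v \<Rightarrow> 'v) \<Rightarrow> 'v \<times> 'v \<Rightarrow> 'v \<times> 'v" where
  "face_step rho d = (snd d, rho (snd d) (fst d))"

definition face_of :: "('v \<Rightarrow> 'v \<Rightarrow> 'v) \<Rightarrow> 'v \<times> 'v \<Rightarrow> ('v \<times> 'v) set" where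
  "face_of rho d = {(face_step rho ^^ n) d | n. True}"

definition faces :: "('v \<Rightarrow> 'v \<Rightarrow> bool) \<Rightarrow> ('v \<Rightarrow> 'v \<Rightarrow> 'v) \<Rightarrow> ('v \<times> 'v) set set" where
  "faces E rho = face_of rho ` darts E"

definition simple_cubic_rotation_graph ::
    "'v set \<Rightarrow> ('v \<Rightarrow> 'v \<Rightarrow> bool) \<Rightarrow> ('v \<Rightarrow> 'v \<Rightarrow> 'v) \<Rightarrow> bool" where
  "simple_cubic_rotation_graph V E rho \<longleftrightarrow>
     finite V \<and>
     (\<forall>u v. E u v \<longrightarrow> u \<in> V \<and> v \<in> V) \<and>
     (\<forall>u v. E u v \<longrightarrow> E v u) \<and>
     (\<forall>v. \<not> E v v) \<and>
     (\<forall>v\<in>V. card (nbrs E v) = 3) \<and>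
     (\<forall>v\<in>V. \<forall>u\<in>nbrs E v. nbrs E v = {u, rho v u, rho v (rho v u)})"

definition connected_graph :: "'v set \<Rightarrow> ('v \<Rightarrow> 'v \<Rightarrow> bool) \<Rightarrow> bool" where
  "connected_graph V E \<longleftrightarrow> V \<noteq> {} \<and> (\<forall>u\<in>V. \<forall>v\<in>V. E\<^sup>*\<^sup>* u v)"

definition plane_rotation :: "'v set \<Rightarrow> ('v \<Rightarrow> 'v \<Rightarrow> bool) \<Rightarrow> ('v \<Rightarrow> 'v \<Rightarrow> 'v) \<Rightarrow> bool" where
  "plane_rotation V E rho \<longleftrightarrow>
     int (card V) - int (card (darts E) div 2) + int (card (faces E rho)) = 2"

definition cubic_plane_graph :: "'v set \<Rightarrow> ('v \<Rightarrow> 'v \<Rightarrow> bool) \<Rightarrow> ('v \<Rightarrow> 'v \<Rightarrow> 'v) \<Rightarrow> bool" where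
  "cubic_plane_graph V E rho \<longleftrightarrow>
     simple_cubic_rotation_graph V E rho \<and> connected_graph V E \<and> plane_rotation V E rho"

text \<open>Number of edges surrounding a face = length of its boundary walk.\<close>
definition face_length :: "('v \<times> 'v) set \<Rightarrow> nat" where
  "face_length f = card f"

definition graph_dist :: "('v \<Rightarrow> 'v \<Rightarrow> bool) \<Rightarrow> 'v \<Rightarrow> 'v \<Rightarrow> nat" where
  "graph_dist E x y = (LEAST n. (E ^^ n) x y)"

text \<open>Path u,v,w turns right at v iff vw follows vu clockwise; left iff counterclockwise.\<close>
definition turns_right :: "('v \<Rightarrow> 'v \<Rightarrow> 'v) \<Rightarrow> 'v \<Rightarrow> 'v \<Rightarrow> 'v \<Rightarrow> bool" where
  "turns_right rho u v w \<longleftrightarrow> w = rho v u"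

definition turns_left :: "('v \<Rightarrow> 'v \<Rightarrow> 'v) \<Rightarrow> 'v \<Rightarrow> 'v \<Rightarrow> 'v \<Rightarrow> bool" where
  "turns_left rho u v w \<longleftrightarrow> rho v w = u"

end

theory Submission
  imports Defs Complex_Main
begin

definition orb :: "('a \<Rightarrow> 'a) \<Rightarrow> 'a \<Rightarrow> 'a set" where
  "orb f x = range (\<lambda>n. (f ^^ n) x)"

definition nc :: "('a \<Rightarrow> 'a) \<Rightarrow> 'a set \<Rightarrow> nat" where
  "nc f S = card (orb f ` S)"

definition per :: "('a \<Rightarrow> 'a) \<Rightarrow> 'a \<Rightarrow> nat" where
  "per f x = (LEAST n. 0 < n \<and> (f ^^ n) x = x)"

definition tr :: "'a \<Rightarrow> 'a \<Rightarrow> 'a \<Rightarrow> 'a" where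
  "tr x y z = (if z = x then y else if z = y then x else z)"

lemma tr_tr: "tr x y \<circ> tr x y = id"
  by (auto simp: tr_def fun_eq_iff)

lemma bij_tr: "bij (tr x y)"
  using o_bij tr_tr by metis

lemma funpow_in: "f ` S \<subseteq> S \<Longrightarrow> x \<in> S \<Longrightarrow> (f ^^ n) x \<in> S"
  by (induction n) auto

lemma orb_subset: "f ` S \<subseteq> S \<Longrightarrow> x \<in> S \<Longrightarrow> orb f x \<subseteq> S"
  unfolding orb_def using funpow_in[of f S x] by auto

lemma self_in_orb: "x \<in> orb f x"
  unfolding orb_def by (metis funpow_0 rangeI)

lemma funpow_in_orb: "(f ^^ n) x \<in> orb f x"
  unfolding orb_def by auto

lemma f_in_orb: "f x \<in> orb f x"
  unfolding orb_def by (rule range_eqI[of _ _ 1]) simp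

lemma per_ex:
  assumes "inj f" "finite S" "f ` S \<subseteq> S" "x \<in> S"
  shows "\<exists>n>0. (f ^^ n) x = x"
proof -
  have "{y. \<exists>n. y = (f ^^ n) x} \<subseteq> S" using funpow_in[OF assms(3,4)] by auto
  hence "finite {y. \<exists>n. y = (f ^^ n) x}" using assms(2) finite_subset by blast
  then obtain n where "n > 0" "(f ^^ n) x = x" using funpow_inj_finite[OF assms(1)] by blast
  thus ?thesis by blast
qed

lemma per_props:
  assumes "inj f" "finite S" "f ` S \<subseteq> S" "x \<in> S"
  shows "0 < per f x" "(f ^^ per f x) x = x" "\<And>m. 0 < m \<Longrightarrow> m < per f x \<Longrightarrow> (f ^^ m) x \<noteq> x"
proof -
  obtain n where n: "0 < n \<and> (f ^^ n) x = x" using per_ex[OF assms] by blast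
  have "0 < per f x \<and> (f ^^ per f x) x = x" unfolding per_def by (rule LeastI[of _ n]) (rule n)
  thus "0 < per f x" "(f ^^ per f x) x = x" by auto
  show "\<And>m. 0 < m \<Longrightarrow> m < per f x \<Longrightarrow> (f ^^ m) x \<noteq> x"
    unfolding per_def using not_less_Least by blast
qed

lemma per_dvd:
  assumes "inj f" "finite S" "f ` S \<subseteq> S" "x \<in> S" "(f ^^ n) x = x"
  shows "per f x dvd n"
proof -
  note P = per_props[OF assms(1-4)]
  have "(f ^^ (n mod per f x)) x = x" using funpow_mod_eq[OF P(2)] assms(5) by simp
  hence "n mod per f x = 0" using P(3)[of "n mod per f x"] P(1) by (meson mod_less_divisor neq0_conv)
  thus ?thesis by auto
qed

lemma orb_per:
  assumes "inj f" "finite S" "f ` S \<subseteq> S" "x \<in> S"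
  shows "orb f x = (\<lambda>n. (f ^^ n) x) ` {..<per f x}"
proof -
  note P = per_props[OF assms]
  show ?thesis unfolding orb_def
  proof (intro equalityI subsetI)
    fix z assume "z \<in> range (\<lambda>n. (f ^^ n) x)"
    then obtain n where "z = (f ^^ n) x" by auto
    hence "z = (f ^^ (n mod per f x)) x" using funpow_mod_eq[OF P(2)] by simp
    thus "z \<in> (\<lambda>n. (f ^^ n) x) ` {..<per f x}" using P(1) by auto
  qed auto
qed

lemma card_orb:
  assumes "inj f" "finite S" "f ` S \<subseteq> S" "x \<in> S"
  shows "card (orb f x) = per f x"
proof -
  note P = per_props[OF assms]
  have "inj_on (\<lambda>k. (f ^^ k) x) {0..<per f x}"
    by (rule inj_on_funpow_least) (use P in auto)
  thus ?thesis unfolding orb_per[OF assms] by (simp add: card_image lessThan_atLeast0)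
qed

lemma orb_periodic:
  assumes "(f ^^ p) x = x" "0 < p"
  shows "orb f x = (\<lambda>n. (f ^^ n) x) ` {1..p}"
  unfolding orb_def
proof (intro equalityI subsetI)
  fix z assume "z \<in> range (\<lambda>n. (f ^^ n) x)"
  then obtain n where z: "z = (f ^^ n) x" by auto
  hence z2: "z = (f ^^ (n mod p)) x" using funpow_mod_eq[OF assms(1)] by simp
  show "z \<in> (\<lambda>n. (f ^^ n) x) ` {1..p}"
  proof (cases "n mod p = 0")
    case True
    hence "z = (f ^^ p) x" using z2 assms by simp
    thus ?thesis using assms by (intro image_eqI[of _ _ p]) auto
  next
    case False
    hence "n mod p \<in> {1..p}" using mod_less_divisor[OF assms(2), of n] by auto
    thus ?thesis using z2 by blast
  qed
qed auto

lemma orb_sym: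
  assumes "inj f" "finite S" "f ` S \<subseteq> S" "x \<in> S" "y \<in> orb f x"
  shows "x \<in> orb f y"
proof -
  note P = per_props[OF assms(1-4)]
  obtain n where y: "y = (f ^^ n) x" using assms(5) unfolding orb_def by auto
  have "1 * Suc n \<le> per f x * Suc n" using P(1) by (intro mult_le_mono1) simp
  hence le: "n \<le> per f x * Suc n" by simp
  have "(f ^^ (per f x * Suc n - n)) y = (f ^^ (per f x * Suc n - n + n)) x"
    by (simp add: y funpow_add)
  also have "per f x * Suc n - n + n = per f x * Suc n"
    using le by simp
  also have "(f ^^ (per f x * Suc n)) x = x"
    using funpow_mod_eq[OF P(2), of "per f x * Suc n"] by simp
  finally show ?thesis unfolding orb_def by (metis rangeI)
qed

lemma orb_trans: "y \<in> orb f x \<Longrightarrow> z \<in> orb f y \<Longrightarrow> z \<in> orb f x"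
proof -
  assume "y \<in> orb f x" "z \<in> orb f y"
  then obtain n m where "y = (f ^^ n) x" "z = (f ^^ m) y" unfolding orb_def by auto
  hence "z = (f ^^ (m + n)) x" by (simp add: funpow_add)
  thus ?thesis unfolding orb_def by auto
qed
  
lemma orb_eq:
  assumes "inj f" "finite S" "f ` S \<subseteq> S" "x \<in> S" "y \<in> orb f x"
  shows "orb f y = orb f x"
proof -
  have "x \<in> orb f y" using orb_sym[OF assms] .
  show ?thesis
  proof (intro equalityI subsetI)
    fix z assume "z \<in> orb f y" thus "z \<in> orb f x" using orb_trans[OF assms(5)] by simp
  next
    fix z assume "z \<in> orb f x" thus "z \<in> orb f y" using orb_trans[OF \<open>x \<in> orb f y\<close>] by simp
  qed
qed

lemma funpow_agree:
  assumes "\<And>i. i < n \<Longrightarrow> g ((f ^^ i) z) = f ((f ^^ i) z)"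
  shows "(g ^^ n) z = (f ^^ n) z"
  using assms by (induction n) auto


lemma bij_comp_tr: assumes "bij f" shows "bij (f \<circ> tr x y)"
  using bij_comp[OF bij_tr assms] .

lemma tr_in: "x \<in> S \<Longrightarrow> y \<in> S \<Longrightarrow> f ` S \<subseteq> S \<Longrightarrow> (f \<circ> tr x y) ` S \<subseteq> S"
  by (auto simp: tr_def)

lemma split_orbits:
  assumes "bij f" "finite S" "f ` S \<subseteq> S" "x \<in> S" "y \<in> S" "x \<noteq> y" "y \<in> orb f x"
  defines "g \<equiv> f \<circ> tr x y"
  shows "orb g x \<union> orb g y = orb f x" "orb g x \<noteq> orb g y"
proof -
  have inj: "inj f" using bij_is_inj[OF assms(1)] .
  note P = per_props[OF inj assms(2,3,4)]
  define L where "L = per f x"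
  obtain m where m: "m < L" "y = (f ^^ m) x"
    using orb_per[OF inj assms(2,3,4)] assms(7) unfolding L_def by auto
  have m0: "0 < m" using m assms(6) by (cases m) auto
  have injL: "inj_on (\<lambda>k. (f ^^ k) x) {0..<L}"
    by (rule inj_on_funpow_least) (use P in \<open>auto simp: L_def\<close>)
  have fLx: "(f ^^ L) x = x" using P L_def by simp
  have ne: "(f ^^ i) x \<noteq> (f ^^ j) x" if "i < L" "j < L" "i \<noteq> j" for i j
    using injL that by (auto dest: inj_onD)
  have c1: "(g ^^ j) y = (f ^^ j) x" if "1 \<le> j" "j \<le> m" for j
    using that
  proof (induction j)
    case 0 then show ?case by simp
  next
    case (Suc j)
    show ?case
    proof (cases "j = 0")
      case True then show ?thesis by (simp add: g_def tr_def)
    next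
      case False
      have h: "(g ^^ j) y = (f ^^ j) x" using Suc False by simp
      have "(f ^^ j) x \<noteq> x" using ne[of j 0] False Suc m by simp
      moreover have "(f ^^ j) x \<noteq> y" using ne[of j m] Suc m by simp
      ultimately have "g ((g ^^ j) y) = f ((f ^^ j) x)" using h by (simp add: g_def tr_def)
      thus ?thesis by simp
    qed
  qed
  have c2: "(g ^^ j) x = (f ^^ (m + j)) x" if "1 \<le> j" "j \<le> L - m" for j
    using that
  proof (induction j)
    case 0 then show ?case by simp
  next
    case (Suc j)
    show ?case
    proof (cases "j = 0")
      case True then show ?thesis using m(2) by (simp add: g_def tr_def)
    next
      case False
      have h: "(g ^^ j) x = (f ^^ (m + j)) x" using Suc False by simp
      have "(f ^^ (m + j)) x \<noteq> x" using ne[of "m + j" 0] False Suc m by simp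
      moreover have "(f ^^ (m + j)) x \<noteq> y" using ne[of "m + j" m] False Suc m by simp
      ultimately have "g ((g ^^ j) x) = f ((f ^^ (m + j)) x)" using h by (simp add: g_def tr_def)
      thus ?thesis by simp
    qed
  qed
  have gy: "orb g y = (\<lambda>i. (f ^^ i) x) ` {1..m}"
  proof -
    have "(g ^^ m) y = (f ^^ m) x" by (rule c1) (use m0 in auto)
    hence gmy: "(g ^^ m) y = y" using m(2) by metis
    have "orb g y = (\<lambda>n. (g ^^ n) y) ` {1..m}" using orb_periodic[OF gmy m0] .
    also have "\<dots> = (\<lambda>i. (f ^^ i) x) ` {1..m}" using c1 by (intro image_cong) auto
    finally show ?thesis .
  qed
  have gx: "orb g x = (\<lambda>i. (f ^^ i) x) ` {m+1..L}"
  proof -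
    have "(g ^^ (L - m)) x = (f ^^ (m + (L - m))) x" by (rule c2) (use m(1) in auto)
    hence gLx: "(g ^^ (L - m)) x = x" using m(1) fLx by simp
    have "orb g x = (\<lambda>n. (g ^^ n) x) ` {1..L-m}" using orb_periodic[OF gLx] m(1) by simp
    also have "\<dots> = (\<lambda>j. (f ^^ (m + j)) x) ` {1..L-m}" using c2 by (intro image_cong) auto
    also have "\<dots> = (\<lambda>i. (f ^^ i) x) ` ((\<lambda>j. m + j) ` {1..L-m})" by (simp only: image_image)
    also have "(\<lambda>j. m + j) ` {1..L-m} = {m+1..L}" using m(1)
      by simp
    finally show ?thesis .
  qed
  have fx: "orb f x = (\<lambda>i. (f ^^ i) x) ` {1..L}"
    using orb_periodic[OF fLx] P L_def by simp
  have un: "{m+1..L} \<union> {1..m} = {1..L}" using m(1) by auto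
  show "orb g x \<union> orb g y = orb f x"
    unfolding gx gy fx un[symmetric] by (simp only: image_Un)
  have "y \<notin> orb g x"
  proof
    assume "y \<in> orb g x"
    then obtain i where i: "i \<in> {m+1..L}" "y = (f ^^ i) x" unfolding gx by auto
    show False
    proof (cases "i = L")
      case True then show False using i fLx assms(6) by simp
    next
      case False then show False using ne[of i m] i m by auto
    qed
  qed
  moreover have "y \<in> orb g y" by (rule self_in_orb)
  ultimately show "orb g x \<noteq> orb g y" by blast
qed

lemma card_ins2: "finite X \<Longrightarrow> P \<noteq> Q \<Longrightarrow> P \<notin> X \<Longrightarrow> Q \<notin> X \<Longrightarrow> card (X \<union> {P, Q}) = card X + 2"
  by (simp add: card_insert_if)

lemma nc_split:
  assumes "bij f" "finite S" "f ` S \<subseteq> S" "x \<in> S" "y \<in> S" "x \<noteq> y" "y \<in> orb f x"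
  shows "nc (f \<circ> tr x y) S = Suc (nc f S)"
proof -
  define g where "g = f \<circ> tr x y"
  define A where "A = orb f x"
  have inj: "inj f" using bij_is_inj[OF assms(1)] .
  have bg: "bij g" unfolding g_def by (rule bij_comp_tr[OF assms(1)])
  have injg: "inj g" using bij_is_inj[OF bg] .
  have gS: "g ` S \<subseteq> S" unfolding g_def by (rule tr_in[OF assms(4,5,3)])
  note sp = split_orbits[OF assms, folded g_def A_def]
  have AS: "A \<subseteq> S" unfolding A_def by (rule orb_subset[OF assms(3,4)])
  have outside: "orb g z = orb f z" if z: "z \<in> S - A" for z
  proof -
    have "(g ^^ n) z = (f ^^ n) z" for n
    proof (rule funpow_agree)
      fix i
      have w: "(f ^^ i) z \<in> orb f z" by (rule funpow_in_orb)
      have "(f ^^ i) z \<noteq> x"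
      proof
        assume "(f ^^ i) z = x"
        hence "x \<in> orb f z" using w by simp
        from orb_sym[OF inj assms(2,3) _ this] have "z \<in> orb f x" using z by blast
        thus False using z A_def by blast
      qed
      moreover have "(f ^^ i) z \<noteq> y"
      proof
        assume "(f ^^ i) z = y"
        hence "y \<in> orb f z" using w by simp
        from orb_sym[OF inj assms(2,3) _ this] have "z \<in> orb f y" using z by blast
        from orb_trans[OF assms(7) this] have "z \<in> orb f x" .
        thus False using z A_def by blast
      qed
      ultimately show "g ((f ^^ i) z) = f ((f ^^ i) z)" by (simp add: g_def tr_def)
    qed
    thus ?thesis unfolding orb_def by simp
  qed
  have disj: "x \<notin> orb f z" "y \<notin> orb f z" if z: "z \<in> S - A" for z
  proof -
    have zS: "z \<in> S" "z \<notin> orb f x" using z A_def by auto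
    show "x \<notin> orb f z"
    proof
      assume "x \<in> orb f z"
      from orb_sym[OF inj assms(2,3) zS(1) this] show False using zS(2) by simp
    qed
    show "y \<notin> orb f z"
    proof
      assume "y \<in> orb f z"
      from orb_sym[OF inj assms(2,3) zS(1) this] have "z \<in> orb f y" .
      from orb_trans[OF assms(7) this] show False using zS(2) by simp
    qed
  qed
  have e1: "orb g ` S = orb f ` (S - A) \<union> {orb g x, orb g y}"
  proof (intro equalityI subsetI)
    fix W assume "W \<in> orb g ` S"
    then obtain z where z: "z \<in> S" "W = orb g z" by auto
    show "W \<in> orb f ` (S - A) \<union> {orb g x, orb g y}"
    proof (cases "z \<in> A")
      case True
      hence "z \<in> orb g x \<or> z \<in> orb g y" using sp(1) by blast
      thus ?thesis using orb_eq[OF injg assms(2) gS] assms(4,5) z by blast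
    next
      case False thus ?thesis using outside z by auto
    qed
  next
    fix W assume "W \<in> orb f ` (S - A) \<union> {orb g x, orb g y}"
    thus "W \<in> orb g ` S" using outside assms(4,5) by auto
  qed
  have e2: "orb f ` S = orb f ` (S - A) \<union> {A}"
  proof (intro equalityI subsetI)
    fix W assume "W \<in> orb f ` S"
    then obtain z where z: "z \<in> S" "W = orb f z" by auto
    show "W \<in> orb f ` (S - A) \<union> {A}"
    proof (cases "z \<in> A")
      case True
      thus ?thesis using orb_eq[OF inj assms(2,3,4)] z A_def by blast
    next
      case False thus ?thesis using z by auto
    qed
  next
    fix W assume "W \<in> orb f ` (S - A) \<union> {A}"
    thus "W \<in> orb f ` S" using A_def assms(4) by auto
  qed
  have fin: "finite (orb f ` (S - A))" using assms(2) by simp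
  have n1: "orb g x \<notin> orb f ` (S - A)"
  proof
    assume "orb g x \<in> orb f ` (S - A)"
    then obtain z where "z \<in> S - A" "orb g x = orb f z" by blast
    thus False using disj(1)[of z] self_in_orb[of x g] by simp
  qed
  have n2: "orb g y \<notin> orb f ` (S - A)"
  proof
    assume "orb g y \<in> orb f ` (S - A)"
    then obtain z where "z \<in> S - A" "orb g y = orb f z" by blast
    thus False using disj(2)[of z] self_in_orb[of y g] by simp
  qed
  have n3: "A \<notin> orb f ` (S - A)"
  proof
    assume "A \<in> orb f ` (S - A)"
    then obtain z where "z \<in> S - A" "A = orb f z" by blast
    thus False using disj(1)[of z] self_in_orb[of x f] A_def by simp
  qed
  have "nc g S = card (orb f ` (S - A)) + 2"
    unfolding nc_def e1 using card_ins2[OF fin sp(2) n1 n2] .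
  moreover have "nc f S = card (orb f ` (S - A)) + 1"
    unfolding nc_def e2 using fin n3 by simp
  ultimately show ?thesis unfolding g_def by simp
qed

lemma merge_in_orb:
  assumes "bij f" "finite S" "f ` S \<subseteq> S" "x \<in> S" "y \<in> S" "x \<noteq> y" "y \<notin> orb f x"
  shows "y \<in> orb (f \<circ> tr x y) x"
proof -
  define g where "g = f \<circ> tr x y"
  have inj: "inj f" using bij_is_inj[OF assms(1)] .
  note P = per_props[OF inj assms(2,3,5)]
  define p where "p = per f y"
  have xn: "x \<notin> orb f y" using orb_sym[OF inj assms(2,3,5), of x] assms(7) by blast
  have c: "(g ^^ j) x = (f ^^ j) y" if "1 \<le> j" "j \<le> p" for j
    using that
  proof (induction j)
    case 0 then show ?case by simp
  next
    case (Suc j)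
    show ?case
    proof (cases "j = 0")
      case True then show ?thesis by (simp add: g_def tr_def)
    next
      case False
      have h: "(g ^^ j) x = (f ^^ j) y" using Suc False by simp
      have "(f ^^ j) y \<noteq> y" using P(3)[of j] False Suc p_def by simp
      moreover have "(f ^^ j) y \<noteq> x" using xn funpow_in_orb by metis
      ultimately have "g ((g ^^ j) x) = f ((f ^^ j) y)" using h by (simp add: g_def tr_def)
      thus ?thesis by simp
    qed
  qed
  have "(g ^^ p) x = y" using c[of p] P p_def by (simp add: Suc_le_eq)
  thus ?thesis unfolding g_def by (metis funpow_in_orb)
qed

lemma nc_merge:
  assumes "bij f" "finite S" "f ` S \<subseteq> S" "x \<in> S" "y \<in> S" "x \<noteq> y" "y \<notin> orb f x"
  shows "nc f S = Suc (nc (f \<circ> tr x y) S)"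
proof -
  define g where "g = f \<circ> tr x y"
  have bg: "bij g" unfolding g_def by (rule bij_comp_tr[OF assms(1)])
  have gS: "g ` S \<subseteq> S" unfolding g_def by (rule tr_in[OF assms(4,5,3)])
  have "y \<in> orb g x" unfolding g_def by (rule merge_in_orb[OF assms])
  note r = nc_split[OF bg assms(2) gS assms(4,5,6) this]
  have "g \<circ> tr x y = f" unfolding g_def by (simp add: comp_assoc tr_tr)
  thus ?thesis using r g_def by simp
qed

definition stp :: "('a \<Rightarrow> 'a) \<Rightarrow> ('a \<Rightarrow> 'a) \<Rightarrow> 'a \<Rightarrow> 'a \<Rightarrow> bool" where
  "stp a b u v \<longleftrightarrow> v = a u \<or> v = b u"

lemma reach_funpow: "(\<And>u. R u (f u)) \<Longrightarrow> R\<^sup>*\<^sup>* z ((f ^^ n) z)"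
  by (induction n) (auto intro: rtranclp.rtrancl_into_rtrancl)

lemma reach_in:
  assumes "a ` S \<subseteq> S" "b ` S \<subseteq> S" "(stp a b)\<^sup>*\<^sup>* u v" "u \<in> S" shows "v \<in> S"
  using assms(3,4) by (induction rule: rtranclp_induct) (use assms(1,2) in \<open>auto simp: stp_def\<close>)

lemma back_step:
  assumes "inj f" "finite S" "f ` S \<subseteq> S" "w \<in> S" "\<And>u. R u (f u)"
  shows "R\<^sup>*\<^sup>* (f w) w"
proof -
  note P = per_props[OF assms(1-4)]
  have "(f ^^ (per f w - 1)) (f w) = (f ^^ (per f w - 1 + 1)) w"
    by (simp only: funpow_add) simp
  also have "per f w - 1 + 1 = per f w" using P(1) by simp
  finally have "(f ^^ (per f w - 1)) (f w) = w" using P(2) by simp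
  thus ?thesis using reach_funpow[of R f] assms(5) by metis
qed

lemma reach_sym:
  assumes "bij a" "bij b" "finite S" "a ` S \<subseteq> S" "b ` S \<subseteq> S" "u \<in> S" "(stp a b)\<^sup>*\<^sup>* u v"
  shows "(stp a b)\<^sup>*\<^sup>* v u"
  using assms(7)
proof (induction rule: rtranclp_induct)
  case base then show ?case by simp
next
  case (step w v)
  have wS: "w \<in> S" using reach_in[OF assms(4,5) step(1) assms(6)] .
  have "(stp a b)\<^sup>*\<^sup>* v w"
  proof (cases "v = a w")
    case True
    thus ?thesis using back_step[OF bij_is_inj[OF assms(1)] assms(3,4) wS, of "stp a b"]
      by (simp add: stp_def)
  next
    case False
    hence "v = b w" using step(2) by (simp add: stp_def)
    thus ?thesis using back_step[OF bij_is_inj[OF assms(2)] assms(3,5) wS, of "stp a b"]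
      by (simp add: stp_def)
  qed
  thus ?case using step(3) by simp
qed

lemma nc_le_card: "finite S \<Longrightarrow> nc f S \<le> card S"
  unfolding nc_def by (rule card_image_le)

lemma nc_union:
  assumes "finite A" "finite B" "A \<inter> B = {}" "f ` A \<subseteq> A" "f ` B \<subseteq> B"
  shows "nc f (A \<union> B) = nc f A + nc f B"
proof -
  have "orb f ` A \<inter> orb f ` B = {}"
  proof (rule ccontr)
    assume "orb f ` A \<inter> orb f ` B \<noteq> {}"
    then obtain p q where "p \<in> A" "q \<in> B" "orb f p = orb f q" by auto
    hence "p \<in> orb f q" using self_in_orb by metis
    thus False using orb_subset[OF assms(5) \<open>q \<in> B\<close>] \<open>p \<in> A\<close> assms(3) by blast
  qed
  thus ?thesis unfolding nc_def image_Un using assms(1,2) by (simp add: card_Un_disjoint)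
qed

lemma nc_fix:
  assumes "finite S" "\<forall>z\<in>S. b z = z"
  shows "nc b S = card S"
proof -
  have "orb b z = {z}" if "z \<in> S" for z
  proof -
    have "(b ^^ n) z = z" for n using that assms(2) by (induction n) auto
    thus ?thesis unfolding orb_def by auto
  qed
  hence "orb b ` S = (\<lambda>z. {z}) ` S" by auto
  moreover have "inj_on (\<lambda>z. {z}) S" by (auto intro: inj_onI)
  ultimately show ?thesis unfolding nc_def by (simp add: card_image)
qed

lemma ree:
  assumes "finite S" "bij a" "bij b" "a ` S \<subseteq> S" "b ` S \<subseteq> S"
    "\<forall>x\<in>S. \<forall>y\<in>S. (stp a b)\<^sup>*\<^sup>* x y"
  shows "nc a S + nc b S + nc (a \<circ> b) S \<le> card S + 2"
  using assms
proof (induction "card S - nc b S" arbitrary: S a b rule: less_induct)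
  case less
  note fin = less.prems(1)
  show ?case
  proof (cases "\<forall>z\<in>S. b z = z")
    case True
    have nb: "nc b S = card S" using nc_fix[OF fin True] .
    have ab: "orb (a \<circ> b) z = orb a z" if "z \<in> S" for z
    proof -
      have "((a \<circ> b) ^^ n) z = (a ^^ n) z" for n
      proof (rule funpow_agree)
        fix i have "(a ^^ i) z \<in> S" using funpow_in[OF less.prems(4) that] .
        thus "(a \<circ> b) ((a ^^ i) z) = a ((a ^^ i) z)" using True by simp
      qed
      thus ?thesis unfolding orb_def by simp
    qed
    have nab: "nc (a \<circ> b) S = nc a S" unfolding nc_def using ab by (metis image_cong)
    have "nc a S \<le> 1"
    proof (cases "S = {}")
      case True thus ?thesis by (simp add: nc_def)
    next
      case False
      then obtain x0 where x0: "x0 \<in> S" by auto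
      have "z \<in> orb a x0" if "z \<in> S" for z
      proof -
        have "(stp a b)\<^sup>*\<^sup>* x0 z" using less.prems(6) x0 that by blast
        thus ?thesis
        proof (induction rule: rtranclp_induct)
          case base then show ?case by (rule self_in_orb)
        next
          case (step w v)
          have "w \<in> S" using reach_in[OF less.prems(4,5) step(1) x0] .
          hence "v = a w \<or> v = w" using step(2) True by (auto simp: stp_def)
          moreover have "a w \<in> orb a w" by (rule f_in_orb)
          ultimately show ?case using step(3) orb_trans by metis
        qed
      qed
      hence "orb a ` S \<subseteq> {orb a x0}"
        using orb_eq[OF bij_is_inj[OF less.prems(2)] fin less.prems(4) x0] by blast
      from card_mono[OF _ this] show ?thesis unfolding nc_def by simp
    qed
    thus ?thesis using nb nab by simp
  next
    case False
    then obtain x where x: "x \<in> S" "b x \<noteq> x" by auto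
    define y where "y = b x"
    have yS: "y \<in> S" using x less.prems(5) y_def by blast
    have xy: "x \<noteq> y" using x y_def by simp
    have yo: "y \<in> orb b x" unfolding y_def by (rule f_in_orb)
    define b' where "b' = b \<circ> tr x y"
    have bb': "bij b'" unfolding b'_def by (rule bij_comp_tr[OF less.prems(3)])
    have b'S: "b' ` S \<subseteq> S" unfolding b'_def by (rule tr_in[OF x(1) yS less.prems(5)])
    have ncb': "nc b' S = Suc (nc b S)"
      unfolding b'_def by (rule nc_split[OF less.prems(3) fin less.prems(5) x(1) yS xy yo])
    have bab: "(a \<circ> b') \<circ> tr x y = a \<circ> b" unfolding b'_def by (simp add: comp_assoc tr_tr)
    have bab': "bij (a \<circ> b')" using bij_comp[OF bb' less.prems(2)] .
    have abS: "(a \<circ> b') ` S \<subseteq> S" using b'S less.prems(4) by auto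
    have ncab: "nc (a \<circ> b) S \<le> Suc (nc (a \<circ> b') S)"
      and ncab2: "y \<notin> orb (a \<circ> b') x \<Longrightarrow> nc (a \<circ> b') S = Suc (nc (a \<circ> b) S)"
    proof -
      show "nc (a \<circ> b) S \<le> Suc (nc (a \<circ> b') S)"
      proof (cases "y \<in> orb (a \<circ> b') x")
        case True
        show ?thesis using nc_split[OF bab' fin abS x(1) yS xy True] bab by simp
      next
        case False
        show ?thesis using nc_merge[OF bab' fin abS x(1) yS xy False] bab by simp
      qed
      show "y \<notin> orb (a \<circ> b') x \<Longrightarrow> nc (a \<circ> b') S = Suc (nc (a \<circ> b) S)"
        using nc_merge[OF bab' fin abS x(1) yS xy] bab by simp
    qed
    let ?R = "stp a b'"
    have cover: "?R\<^sup>*\<^sup>* x z \<or> ?R\<^sup>*\<^sup>* y z" if "z \<in> S" for z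
    proof -
      have "(stp a b)\<^sup>*\<^sup>* x z" using less.prems(6) x(1) that by blast
      thus ?thesis
      proof (induction rule: rtranclp_induct)
        case base then show ?case by simp
      next
        case (step w v)
        show ?case
        proof (cases "v = a w")
          case True
          have "?R w v" using True by (simp add: stp_def)
          thus ?thesis using step(3) by (meson rtranclp.rtrancl_into_rtrancl)
        next
          case False
          hence v: "v = b w" using step(2) by (simp add: stp_def)
          show ?thesis
          proof (cases "w = x \<or> w = y")
            case True
            show ?thesis
            proof (cases "w = x")
              case True
              hence "v = b' y" using v by (simp add: b'_def tr_def)
              hence "?R y v" by (simp add: stp_def)
              thus ?thesis by blast
            next
              case False
              hence "w = y" using \<open>w = x \<or> w = y\<close> by simp
              hence "v = b' x" using v xy by (simp add: b'_def tr_def)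
              hence "?R x v" by (simp add: stp_def)
              thus ?thesis by blast
            qed
          next
            case False
            hence "v = b' w" using v by (simp add: b'_def tr_def)
            hence "?R w v" by (simp add: stp_def)
            thus ?thesis using step(3) by (meson rtranclp.rtrancl_into_rtrancl)
          qed
        qed
      qed
    qed
    have symR: "?R\<^sup>*\<^sup>* v u" if "u \<in> S" "?R\<^sup>*\<^sup>* u v" for u v
      using reach_sym[OF less.prems(2) bb' fin less.prems(4) b'S that] .
    have inR: "v \<in> S" if "u \<in> S" "?R\<^sup>*\<^sup>* u v" for u v
      using reach_in[OF less.prems(4) b'S that(2,1)] .
    have meas: "card S - nc b' S < card S - nc b S"
      using ncb' nc_le_card[OF fin, of b'] by simp
    show ?thesis
    proof (cases "?R\<^sup>*\<^sup>* x y")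
      case True
      have trans: "\<forall>u\<in>S. \<forall>v\<in>S. ?R\<^sup>*\<^sup>* u v"
      proof (intro ballI)
        fix u v assume uv: "u \<in> S" "v \<in> S"
        have xv: "?R\<^sup>*\<^sup>* x v" using cover[OF uv(2)] True by (meson rtranclp_trans)
        have xu: "?R\<^sup>*\<^sup>* x u" using cover[OF uv(1)] True by (meson rtranclp_trans)
        have "?R\<^sup>*\<^sup>* u x" using symR[OF x(1) xu] .
        thus "?R\<^sup>*\<^sup>* u v" using xv by (meson rtranclp_trans)
      qed
      have IH: "nc a S + nc b' S + nc (a \<circ> b') S \<le> card S + 2"
        using less.hyps[OF meas fin less.prems(2) bb' less.prems(4) b'S trans] .
      thus ?thesis using ncb' ncab by simp
    next
      case False
      define O1 where "O1 = {z\<in>S. ?R\<^sup>*\<^sup>* x z}"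
      define O2 where "O2 = {z\<in>S. ?R\<^sup>*\<^sup>* y z}"
      have un: "S = O1 \<union> O2" using cover O1_def O2_def by blast
      have dj: "O1 \<inter> O2 = {}"
      proof (rule ccontr)
        assume "O1 \<inter> O2 \<noteq> {}"
        then obtain z where z: "z \<in> S" "?R\<^sup>*\<^sup>* x z" "?R\<^sup>*\<^sup>* y z" unfolding O1_def O2_def by auto
        have "?R\<^sup>*\<^sup>* z y" using symR[OF yS z(3)] .
        thus False using False z(2) by (meson rtranclp_trans)
      qed
      have fin1: "finite O1" "finite O2" using fin O1_def O2_def by auto
      have clos: "f ` {z\<in>S. ?R\<^sup>*\<^sup>* p z} \<subseteq> {z\<in>S. ?R\<^sup>*\<^sup>* p z}"
        if "f = a \<or> f = b'" for f p
      proof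
        fix w assume "w \<in> f ` {z\<in>S. ?R\<^sup>*\<^sup>* p z}"
        then obtain z where z: "z \<in> S" "?R\<^sup>*\<^sup>* p z" "w = f z" by auto
        have "?R z w" using that z(3) by (auto simp: stp_def)
        hence "?R\<^sup>*\<^sup>* p w" using z(2) by (meson rtranclp.rtrancl_into_rtrancl)
        moreover have "w \<in> S" using z less.prems(4) b'S that by auto
        ultimately show "w \<in> {z\<in>S. ?R\<^sup>*\<^sup>* p z}" by simp
      qed
      have a1: "a ` O1 \<subseteq> O1" "b' ` O1 \<subseteq> O1" "a ` O2 \<subseteq> O2" "b' ` O2 \<subseteq> O2"
        unfolding O1_def O2_def using clos by blast+
      have ab1: "(a \<circ> b') ` O1 \<subseteq> O1" "(a \<circ> b') ` O2 \<subseteq> O2" using a1 by (auto simp: image_subset_iff)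
      have tr1: "\<forall>u\<in>O1. \<forall>v\<in>O1. ?R\<^sup>*\<^sup>* u v"
      proof (intro ballI)
        fix u v assume "u \<in> O1" "v \<in> O1"
        hence "u \<in> S" "?R\<^sup>*\<^sup>* x u" "?R\<^sup>*\<^sup>* x v" unfolding O1_def by auto
        thus "?R\<^sup>*\<^sup>* u v" using symR[OF x(1)] by (meson rtranclp_trans)
      qed
      have tr2: "\<forall>u\<in>O2. \<forall>v\<in>O2. ?R\<^sup>*\<^sup>* u v"
      proof (intro ballI)
        fix u v assume "u \<in> O2" "v \<in> O2"
        hence "u \<in> S" "?R\<^sup>*\<^sup>* y u" "?R\<^sup>*\<^sup>* y v" unfolding O2_def by auto
        thus "?R\<^sup>*\<^sup>* u v" using symR[OF yS] by (meson rtranclp_trans)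
      qed
      have ncS: "nc f S = nc f O1 + nc f O2" if "f ` O1 \<subseteq> O1" "f ` O2 \<subseteq> O2" for f
        using nc_union[OF fin1 dj that] un by simp
      have cS: "card S = card O1 + card O2" using un dj fin1 by (simp add: card_Un_disjoint)
      have le1: "nc b' O1 \<le> card O1" "nc b' O2 \<le> card O2" using nc_le_card fin1 by auto
      have m1: "card O1 - nc b' O1 < card S - nc b S"
        using ncb' ncS[OF a1(2,4)] cS le1 by linarith
      have m2: "card O2 - nc b' O2 < card S - nc b S"
        using ncb' ncS[OF a1(2,4)] cS le1 by linarith
      have IH1: "nc a O1 + nc b' O1 + nc (a \<circ> b') O1 \<le> card O1 + 2"
        using less.hyps[OF m1 fin1(1) less.prems(2) bb' a1(1,2) tr1] .
      have IH2: "nc a O2 + nc b' O2 + nc (a \<circ> b') O2 \<le> card O2 + 2"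
        using less.hyps[OF m2 fin1(2) less.prems(2) bb' a1(3,4) tr2] .
      have "y \<notin> orb (a \<circ> b') x"
      proof
        assume "y \<in> orb (a \<circ> b') x"
        then obtain n where "y = ((a \<circ> b') ^^ n) x" unfolding orb_def by auto
        moreover have "?R\<^sup>*\<^sup>* x (((a \<circ> b') ^^ n) x)"
        proof -
          have st: "?R\<^sup>*\<^sup>* u ((a \<circ> b') u)" for u
            by (rule rtranclp_trans[of _ _ "b' u"]) (auto simp: stp_def)
          have "(?R\<^sup>*\<^sup>*)\<^sup>*\<^sup>* x (((a \<circ> b') ^^ n) x)"
            by (rule reach_funpow[of "?R\<^sup>*\<^sup>*"]) (rule st)
          thus ?thesis by (simp only: rtranclp_idemp)
        qed
        ultimately show False using False by simp
      qed
      hence "nc (a \<circ> b') S = Suc (nc (a \<circ> b) S)" using ncab2 by blast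
      thus ?thesis using IH1 IH2 ncS[OF a1(1,3)] ncS[OF a1(2,4)] ncS[OF ab1] ncb' cS by linarith
    qed
  qed
qed

lemma nc_weight:
  assumes "bij f" "finite S" "f ` S \<subseteq> S"
  shows "real (nc f S) = (\<Sum>z\<in>S. 1 / real (card (orb f z)))"
proof -
  have inj: "inj f" using bij_is_inj[OF assms(1)] .
  have "(\<Sum>z\<in>S. 1 / real (card (orb f z))) =
        (\<Sum>W\<in>orb f ` S. \<Sum>z\<in>{z. z \<in> S \<and> orb f z = W}. 1 / real (card (orb f z)))"
    by (rule sum.image_gen[OF assms(2)])
  also have "\<dots> = (\<Sum>W\<in>orb f ` S. 1)"
  proof (rule sum.cong[OF refl])
    fix W assume "W \<in> orb f ` S"
    then obtain w where w: "w \<in> S" "W = orb f w" by auto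
    have WS: "W \<subseteq> S" using orb_subset[OF assms(3) w(1)] w(2) by simp
    have eq: "{z. z \<in> S \<and> orb f z = W} = W"
    proof (intro equalityI subsetI)
      fix z assume "z \<in> {z. z \<in> S \<and> orb f z = W}"
      thus "z \<in> W" using self_in_orb[of z f] by auto
    next
      fix z assume "z \<in> W"
      thus "z \<in> {z. z \<in> S \<and> orb f z = W}" using orb_eq[OF inj assms(2,3) w(1)] w(2) WS by auto
    qed
    have finW: "finite W" using WS assms(2) finite_subset by blast
    have neW: "W \<noteq> {}" using w(2) self_in_orb[of w f] by auto
    have "(\<Sum>z\<in>W. 1 / real (card (orb f z))) = (\<Sum>z\<in>W. 1 / real (card W))"
    proof (rule sum.cong[OF refl])
      fix z assume "z \<in> W" thus "1 / real (card (orb f z)) = 1 / real (card W)"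
        using orb_eq[OF inj assms(2,3) w(1)] w(2) by simp
    qed
    also have "\<dots> = 1" using finW neW by simp
    finally show "(\<Sum>z\<in>{z. z \<in> S \<and> orb f z = W}. 1 / real (card (orb f z))) = 1" using eq by simp
  qed
  also have "\<dots> = real (nc f S)" unfolding nc_def by simp
  finally show ?thesis by simp
qed

lemma orb3:
  assumes "(f ^^ 3) z = z" shows "orb f z = {f z, f (f z), z}"
proof -
  have "orb f z = (\<lambda>n. (f ^^ n) z) ` {1..3}" using orb_periodic[OF assms] by simp
  also have "{1..3::nat} = {1,2,3}" by auto
  finally show ?thesis using assms by (simp add: numeral_2_eq_2 numeral_3_eq_3)
qed

lemma orb2:
  assumes "(f ^^ 2) z = z" shows "orb f z = {f z, z}"
proof -
  have "orb f z = (\<lambda>n. (f ^^ n) z) ` {1..2}" using orb_periodic[OF assms] by simp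
  also have "{1..2::nat} = {1,2}" by auto
  finally show ?thesis using assms by (simp add: numeral_2_eq_2)
qed

lemma card3_distinct: "card {a, b, c} = 3 \<Longrightarrow> a \<noteq> b \<and> a \<noteq> c \<and> b \<noteq> c"
  by (cases "a = b"; cases "a = c"; cases "b = c"; simp add: card_insert_if)

datatype z3 = Z0 | Z1 | Z2

lemma UNIV_z3: "(UNIV :: z3 set) = {Z0, Z1, Z2}"
  using z3.exhaust by auto

instance z3 :: finite
  by standard (simp add: UNIV_z3)

fun nx :: "z3 \<Rightarrow> z3" where
  "nx Z0 = Z1" | "nx Z1 = Z2" | "nx Z2 = Z0"

fun gk :: "z3 \<Rightarrow> bool \<times> bool" where
  "gk Z0 = (True, False)" | "gk Z1 = (False, True)" | "gk Z2 = (True, True)"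

definition xorp :: "bool \<times> bool \<Rightarrow> bool \<times> bool \<Rightarrow> bool \<times> bool" where
  "xorp p q = (fst p \<noteq> fst q, snd p \<noteq> snd q)"

type_synonym st = "z3 \<times> bool \<times> bool"

definition rr :: "st \<Rightarrow> st" where "rr s = (nx (fst s), snd s)"
definition tt :: "st \<Rightarrow> st" where "tt s = (fst s, xorp (snd s) (gk (fst s)))"

lemma nx3: "nx (nx (nx c)) = c" by (cases c) auto
lemma rr3: "rr (rr (rr s)) = s" by (simp add: rr_def nx3)
lemma tt2: "tt (tt s) = s" by (cases s) (auto simp: tt_def xorp_def)
lemma rt3': "(rr \<circ> tt) ((rr \<circ> tt) ((rr \<circ> tt) (c, p))) = (c, p)"
  by (cases c; cases p) (auto simp: rr_def tt_def xorp_def)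
lemma rt3: "(rr \<circ> tt) ((rr \<circ> tt) ((rr \<circ> tt) s)) = s"
  using rt3'[of "fst s" "snd s"] by simp
lemma rt3_pow: "((rr \<circ> tt) ^^ (3 * q)) s = s"
proof -
  have "((rr \<circ> tt) ^^ 3) = id" using rt3 by (auto simp: fun_eq_iff numeral_3_eq_3)
  have "(rr \<circ> tt) ^^ (3 * q) = ((rr \<circ> tt) ^^ 3) ^^ q" by (simp add: funpow_mult)
  also have "\<dots> = id ^^ q" using \<open>((rr \<circ> tt) ^^ 3) = id\<close> by simp
  also have "\<dots> = id" by (induction q) auto
  finally show ?thesis by simp
qed

locale cg =
  fixes V :: "'v set" and E :: "'v \<Rightarrow> 'v \<Rightarrow> bool" and rho :: "'v \<Rightarrow> 'v \<Rightarrow> 'v"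
  assumes sg: "simple_cubic_rotation_graph V E rho"
    and conn: "connected_graph V E"
    and plan: "plane_rotation V E rho"
    and div3: "\<forall>f\<in>faces E rho. 3 dvd face_length f"
begin

lemma finV: "finite V" using sg unfolding simple_cubic_rotation_graph_def by blast
lemma E_V: "E u v \<Longrightarrow> u \<in> V \<and> v \<in> V" using sg unfolding simple_cubic_rotation_graph_def by blast
lemma E_sym: "E u v \<Longrightarrow> E v u" using sg unfolding simple_cubic_rotation_graph_def by blast
lemma E_irr: "\<not> E v v" using sg unfolding simple_cubic_rotation_graph_def by blast
lemma nb3: "u \<in> V \<Longrightarrow> card (nbrs E u) = 3" using sg unfolding simple_cubic_rotation_graph_def by blast
lemma nbrs_rot: "u \<in> V \<Longrightarrow> w \<in> nbrs E u \<Longrightarrow> nbrs E u = {w, rho u w, rho u (rho u w)}"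
  using sg unfolding simple_cubic_rotation_graph_def by blast

lemma rot_props:
  assumes "E u w"
  shows "E u (rho u w)" "rho u w \<noteq> w" "rho u (rho u w) \<noteq> w" "rho u (rho u w) \<noteq> rho u w"
    "rho u (rho u (rho u w)) = w"
    "E u z \<Longrightarrow> z = w \<or> z = rho u w \<or> z = rho u (rho u w)"
proof -
  have uV: "u \<in> V" using E_V assms by blast
  have wN: "w \<in> nbrs E u" using assms by (simp add: nbrs_def)
  have N: "nbrs E u = {w, rho u w, rho u (rho u w)}" using nbrs_rot[OF uV wN] .
  have d: "w \<noteq> rho u w \<and> w \<noteq> rho u (rho u w) \<and> rho u w \<noteq> rho u (rho u w)"
    using card3_distinct nb3[OF uV] N by metis
  thus "rho u w \<noteq> w" "rho u (rho u w) \<noteq> w" "rho u (rho u w) \<noteq> rho u w" by auto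
  have rN: "rho u w \<in> nbrs E u" using N by auto
  thus "E u (rho u w)" by (simp add: nbrs_def)
  have N2: "nbrs E u = {rho u w, rho u (rho u w), rho u (rho u (rho u w))}" using nbrs_rot[OF uV rN] .
  have d2: "rho u w \<noteq> rho u (rho u (rho u w)) \<and> rho u (rho u w) \<noteq> rho u (rho u (rho u w))"
    using card3_distinct nb3[OF uV] N2 by metis
  have "rho u (rho u (rho u w)) \<in> nbrs E u" using N2 by auto
  thus "rho u (rho u (rho u w)) = w" using N d2 by auto
  show "E u z \<Longrightarrow> z = w \<or> z = rho u w \<or> z = rho u (rho u w)"
    using N by (auto simp: nbrs_def)
qed

abbreviation "D \<equiv> darts E"

lemma D_iff: "(u, w) \<in> D \<longleftrightarrow> E u w" by (simp add: darts_def)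
lemma D_iff': "d \<in> D \<longleftrightarrow> E (fst d) (snd d)" by (cases d) (simp add: darts_def)

lemma finD: "finite D"
proof -
  have "D \<subseteq> V \<times> V" using E_V by (auto simp: darts_def)
  thus ?thesis using finV finite_subset by blast
qed

definition sig :: "'v \<times> 'v \<Rightarrow> 'v \<times> 'v" where
  "sig d = (if d \<in> D then (fst d, rho (fst d) (snd d)) else d)"
definition alp :: "'v \<times> 'v \<Rightarrow> 'v \<times> 'v" where
  "alp d = (snd d, fst d)"
definition phi :: "'v \<times> 'v \<Rightarrow> 'v \<times> 'v" where
  "phi = sig \<circ> alp"

lemma sig_D: "d \<in> D \<Longrightarrow> sig d \<in> D"
  using rot_props(1) by (auto simp: sig_def D_iff')
lemma sig_uw: "E u w \<Longrightarrow> sig (u, w) = (u, rho u w)"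
  by (simp add: sig_def D_iff)
lemma sig3: "sig (sig (sig d)) = d"
proof (cases "d \<in> D")
  case True
  obtain u w where d: "d = (u, w)" by (cases d)
  have E: "E u w" using True d D_iff by simp
  have E1: "E u (rho u w)" using rot_props(1)[OF E] .
  have E2: "E u (rho u (rho u w))" using rot_props(1)[OF E1] .
  show ?thesis using rot_props(5)[OF E] E E1 E2 d by (simp add: sig_uw)
next
  case False thus ?thesis by (simp add: sig_def)
qed
lemma bij_sig: "bij sig"
proof (rule o_bij[of "sig \<circ> sig" sig])
  show "sig \<circ> (sig \<circ> sig) = id" using sig3 by (simp add: fun_eq_iff)
  show "(sig \<circ> sig) \<circ> sig = id" using sig3 by (simp add: fun_eq_iff)
qed
lemma alp_D: "d \<in> D \<Longrightarrow> alp d \<in> D"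
  using E_sym by (auto simp: alp_def D_iff')
lemma alp2: "alp (alp d) = d" by (simp add: alp_def)
lemma bij_alp: "bij alp"
  by (rule o_bij[of alp alp]) (simp_all add: fun_eq_iff alp2)
lemma bij_phi: "bij phi" unfolding phi_def using bij_comp[OF bij_alp bij_sig] .
lemma sigD: "sig ` D \<subseteq> D" using sig_D by blast
lemma alpD: "alp ` D \<subseteq> D" using alp_D by blast
lemma phiD: "phi ` D \<subseteq> D" unfolding phi_def using sig_D alp_D by (simp add: image_subset_iff)

lemma phi_face: "d \<in> D \<Longrightarrow> phi d = face_step rho d"
proof -
  assume d: "d \<in> D"
  have "alp d \<in> D" using alp_D[OF d] .
  thus ?thesis by (simp add: phi_def sig_def alp_def face_step_def)
qed

lemma phi_pow: "d \<in> D \<Longrightarrow> (phi ^^ n) d = (face_step rho ^^ n) d"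
proof (induction n)
  case 0 thus ?case by simp
next
  case (Suc n)
  have "(phi ^^ n) d \<in> D" using funpow_in[OF phiD Suc.prems] .
  thus ?case using Suc phi_face by simp
qed

lemma orb_phi: "d \<in> D \<Longrightarrow> orb phi d = face_of rho d"
  unfolding orb_def face_of_def using phi_pow by auto

lemma faces_eq: "faces E rho = orb phi ` D"
  unfolding faces_def using orb_phi by (auto simp: image_def)

lemma card_D: "card D = 3 * card V"
proof -
  have "D = Sigma V (nbrs E)" using E_V by (auto simp: darts_def nbrs_def)
  moreover have "\<forall>a\<in>V. finite (nbrs E a)"
  proof
    fix a assume "a \<in> V"
    hence "card (nbrs E a) = 3" using nb3 by blast
    thus "finite (nbrs E a)" using card.infinite by fastforce
  qed
  ultimately have "card D = (\<Sum>u\<in>V. card (nbrs E u))"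
    using finV by simp
  also have "\<dots> = (\<Sum>u\<in>V. 3)" using nb3 by simp
  finally show ?thesis by simp
qed

end

context cg
begin

lemma D_ne: "\<exists>d. d \<in> D"
proof -
  obtain u where u: "u \<in> V" using conn unfolding connected_graph_def by blast
  have "card (nbrs E u) = 3" using nb3[OF u] .
  hence "nbrs E u \<noteq> {}" by auto
  then obtain w where "E u w" by (auto simp: nbrs_def)
  thus ?thesis using D_iff by blast
qed

definition d0 where "d0 = (SOME d. d \<in> D)"
lemma d0D: "d0 \<in> D" unfolding d0_def using D_ne someI_ex by metis

lemma sig_dist: assumes "d \<in> D"
  shows "sig d \<noteq> d" "sig (sig d) \<noteq> d" "sig (sig d) \<noteq> sig d" "(sig ^^ 3) d = d"
proof -
  obtain u w where d: "d = (u, w)" by (cases d)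
  have E: "E u w" using assms d D_iff by simp
  have E1: "E u (rho u w)" using rot_props(1)[OF E] .
  show "sig d \<noteq> d" "sig (sig d) \<noteq> d" "sig (sig d) \<noteq> sig d"
    using rot_props(2,3,4)[OF E] E E1 d by (simp_all add: sig_uw)
  show "(sig ^^ 3) d = d" using sig3[of d] by (simp add: numeral_3_eq_3)
qed

lemma alp_dist: "d \<in> D \<Longrightarrow> alp d \<noteq> d"
  using E_irr by (cases d) (auto simp: alp_def D_iff)

lemma card_orb_alp: "d \<in> D \<Longrightarrow> card (orb alp d) = 2"
proof -
  assume d: "d \<in> D"
  have "(alp ^^ 2) d = d" using alp2 by (simp add: numeral_2_eq_2)
  hence "orb alp d = {alp d, d}" by (rule orb2)
  thus ?thesis using alp_dist[OF d] by simp
qed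

lemma nc_alp: "real (nc alp D) = real (card D) / 2"
proof -
  have "real (nc alp D) = (\<Sum>z\<in>D. 1 / real (card (orb alp z)))"
    by (rule nc_weight[OF bij_alp finD alpD])
  also have "\<dots> = (\<Sum>z\<in>D. 1 / 2)" using card_orb_alp by simp
  finally show ?thesis by simp
qed

lemma euler: "real (card D) / 3 - real (card D) / 2 + real (nc phi D) = 2"
proof -
  have cf: "card (faces E rho) = nc phi D" unfolding faces_eq nc_def ..
  have "real (card D) = 2 * real (nc alp D)" using nc_alp by simp
  hence "card D = 2 * nc alp D" by linarith
  hence cd2: "card D div 2 = nc alp D" by simp
  have "int (card V) - int (nc alp D) + int (nc phi D) = 2"
    using plan unfolding plane_rotation_def cd2 cf .
  hence "real (card V) - real (nc alp D) + real (nc phi D) = 2" by linarith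
  moreover have "real (card V) = real (card D) / 3" using card_D by simp
  ultimately show ?thesis using nc_alp by simp
qed

lemma D_conn: "d \<in> D \<Longrightarrow> (stp sig alp)\<^sup>*\<^sup>* d0 d"
proof -
  let ?R = "stp sig alp"
  have atv: "?R\<^sup>*\<^sup>* (u, w) (u, z)" if "E u w" "E u z" for u w z
  proof -
    have E1: "E u (rho u w)" using rot_props(1)[OF that(1)] .
    have s1: "?R (u, w) (u, rho u w)" using that(1) by (simp add: stp_def sig_uw)
    have s2: "?R (u, rho u w) (u, rho u (rho u w))" using E1 by (simp add: stp_def sig_uw)
    have "z = w \<or> z = rho u w \<or> z = rho u (rho u w)" using rot_props(6)[OF that] .
    thus ?thesis using s1 s2 by auto
  qed
  obtain u0 w0 where d0e: "d0 = (u0, w0)" by (cases d0)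
  have E0: "E u0 w0" using d0D d0e D_iff by simp
  have u0V: "u0 \<in> V" using E_V[OF E0] by simp
  have main: "E\<^sup>*\<^sup>* u0 v \<Longrightarrow> E v w \<Longrightarrow> ?R\<^sup>*\<^sup>* d0 (v, w)" for v w
  proof (induction arbitrary: w rule: rtranclp_induct)
    case base thus ?case using atv[OF E0] d0e by simp
  next
    case (step v v' w)
    have a: "?R\<^sup>*\<^sup>* d0 (v, v')" using step.IH step.hyps(2) by blast
    have b: "?R (v, v') (v', v)" by (simp add: stp_def alp_def)
    have c: "?R\<^sup>*\<^sup>* (v', v) (v', w)" using atv[OF E_sym[OF step.hyps(2)] step.prems] .
    show ?case using a b c by (meson rtranclp.rtrancl_into_rtrancl rtranclp_trans)
  qed
  assume "d \<in> D"
  then obtain v w where d: "d = (v, w)" "E v w" by (cases d) (auto simp: D_iff)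
  have "E\<^sup>*\<^sup>* u0 v" using conn u0V E_V[OF d(2)] unfolding connected_graph_def by blast
  thus ?thesis using main d by blast
qed

definition sig2 :: "('v \<times> 'v) \<times> st \<Rightarrow> ('v \<times> 'v) \<times> st" where
  "sig2 z = (sig (fst z), rr (snd z))"
definition alp2 :: "('v \<times> 'v) \<times> st \<Rightarrow> ('v \<times> 'v) \<times> st" where
  "alp2 z = (alp (fst z), tt (snd z))"
definition phi2 :: "('v \<times> 'v) \<times> st \<Rightarrow> ('v \<times> 'v) \<times> st" where
  "phi2 = sig2 \<circ> alp2"

lemma bij_sig2: "bij sig2"
proof (rule o_bij[of "sig2 \<circ> sig2" sig2])
  show "sig2 \<circ> sig2 \<circ> sig2 = id" by (simp add: fun_eq_iff sig2_def sig3 rr3)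
  show "sig2 \<circ> (sig2 \<circ> sig2) = id" by (simp add: fun_eq_iff sig2_def sig3 rr3)
qed
lemma bij_alp2: "bij alp2"
  by (rule o_bij[of alp2 alp2]) (simp_all add: fun_eq_iff alp2_def alp2 tt2)

abbreviation "DS \<equiv> D \<times> (UNIV :: st set)"
lemma finDS: "finite DS" using finD by simp
lemma sig2DS: "sig2 ` DS \<subseteq> DS" using sig_D by (auto simp: sig2_def)
lemma alp2DS: "alp2 ` DS \<subseteq> DS" using alp_D by (auto simp: alp2_def)

definition z0 :: "('v \<times> 'v) \<times> st" where "z0 = (d0, (Z0, False, False))"
definition C where "C = {z. (stp sig2 alp2)\<^sup>*\<^sup>* z0 z}"

lemma z0DS: "z0 \<in> DS" using d0D by (simp add: z0_def)
lemma C_DS: "C \<subseteq> DS" unfolding C_def using reach_in[OF sig2DS alp2DS _ z0DS] by blast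
lemma finC: "finite C" using C_DS finDS finite_subset by blast
lemma sig2C: "sig2 ` C \<subseteq> C"
  unfolding C_def by (auto simp: stp_def intro: rtranclp.rtrancl_into_rtrancl)
lemma alp2C: "alp2 ` C \<subseteq> C"
  unfolding C_def by (auto simp: stp_def intro: rtranclp.rtrancl_into_rtrancl)
lemma transC: "\<forall>x\<in>C. \<forall>y\<in>C. (stp sig2 alp2)\<^sup>*\<^sup>* x y"
proof (intro ballI)
  fix x y assume xy: "x \<in> C" "y \<in> C"
  have "(stp sig2 alp2)\<^sup>*\<^sup>* x z0"
    using reach_sym[OF bij_sig2 bij_alp2 finDS sig2DS alp2DS z0DS] xy(1) unfolding C_def by blast
  thus "(stp sig2 alp2)\<^sup>*\<^sup>* x y" using xy(2) unfolding C_def by (meson rtranclp_trans mem_Collect_eq)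
qed

lemma ree_C: "nc sig2 C + nc alp2 C + nc (sig2 \<circ> alp2) C \<le> card C + 2"
  by (rule ree[OF finC bij_sig2 bij_alp2 sig2C alp2C transC])

end

context cg
begin

definition F where "F d = {s. (d, s) \<in> C}"

lemma C_Sigma: "C = Sigma D F"
  using C_DS by (auto simp: F_def)

lemma finF: "finite (F d)" by simp

lemma inj_rr: "inj rr"
  by (metis injI rr3)
lemma inj_tt: "inj tt"
  by (metis injI tt2)

lemma F_sig: "card (F d) \<le> card (F (sig d))"
proof -
  have "rr ` F d \<subseteq> F (sig d)"
  proof
    fix s' assume "s' \<in> rr ` F d"
    then obtain s where s: "(d, s) \<in> C" "s' = rr s" by (auto simp: F_def)
    have "sig2 (d, s) \<in> C" using sig2C s(1) by blast
    thus "s' \<in> F (sig d)" using s(2) by (simp add: F_def sig2_def)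
  qed
  hence "card (rr ` F d) \<le> card (F (sig d))" by (intro card_mono) simp_all
  moreover have "card (rr ` F d) = card (F d)" by (rule card_image[OF inj_on_subset[OF inj_rr subset_UNIV]])
  ultimately show ?thesis by simp
qed

lemma F_alp: "card (F d) \<le> card (F (alp d))"
proof -
  have "tt ` F d \<subseteq> F (alp d)"
  proof
    fix s' assume "s' \<in> tt ` F d"
    then obtain s where s: "(d, s) \<in> C" "s' = tt s" by (auto simp: F_def)
    have "alp2 (d, s) \<in> C" using alp2C s(1) by blast
    thus "s' \<in> F (alp d)" using s(2) by (simp add: F_def alp2_def)
  qed
  hence "card (tt ` F d) \<le> card (F (alp d))" by (intro card_mono) simp_all
  moreover have "card (tt ` F d) = card (F d)" by (rule card_image[OF inj_on_subset[OF inj_tt subset_UNIV]])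
  ultimately show ?thesis by simp
qed

lemma F_mono: "(stp sig alp)\<^sup>*\<^sup>* d d' \<Longrightarrow> card (F d) \<le> card (F d')"
proof (induction rule: rtranclp_induct)
  case base thus ?case by simp
next
  case (step y z)
  have "z = sig y \<or> z = alp y" using step(2) by (simp add: stp_def)
  hence "card (F y) \<le> card (F z)" using F_sig[of y] F_alp[of y] by blast
  thus ?case using step(3) by simp
qed

definition k where "k = card (F d0)"

lemma F_k: "d \<in> D \<Longrightarrow> card (F d) = k"
proof -
  assume d: "d \<in> D"
  have a: "(stp sig alp)\<^sup>*\<^sup>* d0 d" using D_conn[OF d] .
  have b: "(stp sig alp)\<^sup>*\<^sup>* d d0" using reach_sym[OF bij_sig bij_alp finD sigD alpD d0D a] .
  show ?thesis using F_mono[OF a] F_mono[OF b] k_def by simp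
qed

lemma k_pos: "1 \<le> k"
proof -
  have "z0 \<in> C" unfolding C_def by simp
  hence "(Z0, False, False) \<in> F d0" by (simp add: F_def z0_def)
  hence "F d0 \<noteq> {}" by auto
  thus ?thesis unfolding k_def using finF by (simp add: Suc_le_eq card_gt_0_iff)
qed

lemma sum_C: "(\<Sum>z\<in>C. h (fst z)) = real k * (\<Sum>d\<in>D. h d)"
proof -
  have "(\<Sum>z\<in>C. h (fst z)) = (\<Sum>(d, s)\<in>Sigma D F. h d)"
    unfolding C_Sigma by (simp add: case_prod_beta)
  also have "\<dots> = (\<Sum>d\<in>D. \<Sum>s\<in>F d. h d)"
    by (rule sum.Sigma[symmetric]) (simp_all add: finD)
  also have "\<dots> = (\<Sum>d\<in>D. real k * h d)" using F_k by simp
  also have "\<dots> = real k * (\<Sum>d\<in>D. h d)" by (simp add: sum_distrib_left)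
  finally show ?thesis .
qed

lemma card_C: "real (card C) = real k * real (card D)"
proof -
  have "(\<Sum>z\<in>C. (\<lambda>_. 1::real) (fst z)) = real k * (\<Sum>d\<in>D. (\<lambda>_. 1::real) d)" by (rule sum_C)
  thus ?thesis by simp
qed

lemma sig2_props: assumes "z \<in> C" shows "card (orb sig2 z) = 3"
proof -
  obtain d s where z: "z = (d, s)" by (cases z)
  have d: "d \<in> D" using assms C_DS z by auto
  have p3: "(sig2 ^^ 3) z = z" using sig3 rr3 z by (simp add: numeral_3_eq_3 sig2_def)
  have "orb sig2 z = {sig2 z, sig2 (sig2 z), z}" by (rule orb3[OF p3])
  moreover have "sig2 z \<noteq> z" "sig2 (sig2 z) \<noteq> z" "sig2 (sig2 z) \<noteq> sig2 z"
    using sig_dist[OF d] z by (auto simp: sig2_def)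
  ultimately show ?thesis by simp
qed

lemma alp2_props: assumes "z \<in> C" shows "card (orb alp2 z) = 2"
proof -
  obtain d s where z: "z = (d, s)" by (cases z)
  have d: "d \<in> D" using assms C_DS z by auto
  have p2: "(alp2 ^^ 2) z = z" using alp2 tt2 z by (simp add: numeral_2_eq_2 alp2_def)
  have "orb alp2 z = {alp2 z, z}" by (rule orb2[OF p2])
  moreover have "alp2 z \<noteq> z" using alp_dist[OF d] z by (auto simp: alp2_def)
  ultimately show ?thesis by simp
qed

lemma phi2_pow: "(phi2 ^^ n) (d, s) = ((phi ^^ n) d, ((rr \<circ> tt) ^^ n) s)"
  by (induction n) (simp_all add: phi2_def phi_def sig2_def alp2_def)

lemma bij_phi2: "bij phi2" unfolding phi2_def using bij_comp[OF bij_alp2 bij_sig2] .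
lemma phi2DS: "phi2 ` DS \<subseteq> DS"
proof
  fix y assume "y \<in> phi2 ` DS"
  then obtain z where z: "z \<in> DS" "y = phi2 z" by blast
  have a: "alp2 z \<in> DS" by (rule bspec[OF alp2DS[unfolded image_subset_iff] z(1)])
  have "sig2 (alp2 z) \<in> DS" by (rule bspec[OF sig2DS[unfolded image_subset_iff] a])
  thus "y \<in> DS" using z(2) by (simp add: phi2_def)
qed

lemma phi2_card: assumes "z \<in> C" shows "card (orb phi2 z) = card (orb phi (fst z))"
proof -
  obtain d s where z: "z = (d, s)" by (cases z)
  have d: "d \<in> D" using assms C_DS z by auto
  have zDS: "z \<in> DS" using d z by simp
  have injp: "inj phi" using bij_is_inj[OF bij_phi] .
  have injp2: "inj phi2" using bij_is_inj[OF bij_phi2] .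
  note P = per_props[OF injp finD phiD d]
  note P2 = per_props[OF injp2 finDS phi2DS zDS]
  define L where "L = per phi d"
  have cL: "card (orb phi d) = L" using card_orb[OF injp finD phiD d] L_def by simp
  have "face_of rho d \<in> faces E rho" using d by (simp add: faces_def)
  hence "3 dvd card (orb phi d)" using div3 orb_phi[OF d] by (simp add: face_length_def)
  then obtain q where q: "L = 3 * q" using cL by auto
  have r1: "((rr \<circ> tt) ^^ L) s = s" unfolding q by (rule rt3_pow)
  have r2: "(phi ^^ L) d = d" using P(2) unfolding L_def .
  have "(phi2 ^^ L) z = ((phi ^^ L) d, ((rr \<circ> tt) ^^ L) s)" unfolding z by (rule phi2_pow)
  hence "(phi2 ^^ L) z = z" using r1 r2 z by simp
  hence "per phi2 z dvd L" using per_dvd[OF injp2 finDS phi2DS zDS] by blast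
  hence le1: "per phi2 z \<le> L" using P(1) L_def by (simp add: dvd_imp_le)
  have "(phi ^^ per phi2 z) d = d" using P2(2) z phi2_pow by simp
  hence "L dvd per phi2 z" using per_dvd[OF injp finD phiD d] L_def by blast
  hence le2: "L \<le> per phi2 z" using P2(1) by (simp add: dvd_imp_le)
  have "card (orb phi2 z) = per phi2 z" using card_orb[OF injp2 finDS phi2DS zDS] .
  thus ?thesis using le1 le2 cL z by simp
qed

lemma k_one: "k = 1"
proof -
  have finC': "finite C" by (rule finC)
  have sig2C': "sig2 ` C \<subseteq> C" by (rule sig2C)
  have a: "real (nc sig2 C) = real (card C) / 3"
  proof -
    have "real (nc sig2 C) = (\<Sum>z\<in>C. 1 / real (card (orb sig2 z)))"
      by (rule nc_weight[OF bij_sig2 finC sig2C])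
    also have "\<dots> = (\<Sum>z\<in>C. 1 / 3)" using sig2_props by simp
    finally show ?thesis by simp
  qed
  have b: "real (nc alp2 C) = real (card C) / 2"
  proof -
    have "real (nc alp2 C) = (\<Sum>z\<in>C. 1 / real (card (orb alp2 z)))"
      by (rule nc_weight[OF bij_alp2 finC alp2C])
    also have "\<dots> = (\<Sum>z\<in>C. 1 / 2)" using alp2_props by simp
    finally show ?thesis by simp
  qed
  have phi2C: "phi2 ` C \<subseteq> C"
  proof
    fix y assume "y \<in> phi2 ` C"
    then obtain z where z: "z \<in> C" "y = phi2 z" by blast
    have a: "alp2 z \<in> C" by (rule bspec[OF alp2C[unfolded image_subset_iff] z(1)])
    have "sig2 (alp2 z) \<in> C" by (rule bspec[OF sig2C[unfolded image_subset_iff] a])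
    thus "y \<in> C" using z(2) by (simp add: phi2_def)
  qed
  have c: "real (nc phi2 C) = real k * real (nc phi D)"
  proof -
    have "real (nc phi2 C) = (\<Sum>z\<in>C. 1 / real (card (orb phi2 z)))"
      by (rule nc_weight[OF bij_phi2 finC phi2C])
    also have "\<dots> = (\<Sum>z\<in>C. 1 / real (card (orb phi (fst z))))" using phi2_card by simp
    also have "\<dots> = real k * (\<Sum>d\<in>D. 1 / real (card (orb phi d)))" by (rule sum_C)
    also have "(\<Sum>d\<in>D. 1 / real (card (orb phi d))) = real (nc phi D)"
      by (rule nc_weight[OF bij_phi finD phiD, symmetric])
    finally show ?thesis .
  qed
  have r: "real (nc sig2 C) + real (nc alp2 C) + real (nc phi2 C) \<le> real (card C) + 2"
    using ree_C unfolding phi2_def by linarith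
  define K where "K = real k"
  define N where "N = real (card D)"
  have e: "real (nc phi D) = 2 + N / 6" using euler N_def by linarith
  have "K * (2 + N / 6) = 2 * K + (K * N) / 6" by (simp add: algebra_simps)
  hence "(K * N) / 3 + (K * N) / 2 + (2 * K + (K * N) / 6) \<le> K * N + 2"
    using r a b c e card_C K_def N_def by simp
  hence "K \<le> 1" by linarith
  thus ?thesis using k_pos K_def by simp
qed

end

lemma gk_nz: "gk c \<noteq> (False, False)" by (cases c) auto
lemma xorp_0: "xorp (False, False) q = q" by (simp add: xorp_def)
lemma xorp_eq0: "xorp p q = (False, False) \<longleftrightarrow> p = q" by (cases p; cases q) (auto simp: xorp_def)
lemma nx_neq: "nx c \<noteq> c" "nx (nx c) \<noteq> c" "nx (nx c) \<noteq> nx c" by (cases c; simp)+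
lemma gk_inj: "gk a = gk b \<longleftrightarrow> a = b" by (cases a; cases b; simp)
lemma z3_one: "p \<noteq> (False, False) \<Longrightarrow>
   (gk c = p \<and> gk (nx c) \<noteq> p \<and> gk (nx (nx c)) \<noteq> p) \<or>
   (gk c \<noteq> p \<and> gk (nx c) = p \<and> gk (nx (nx c)) \<noteq> p) \<or>
   (gk c \<noteq> p \<and> gk (nx c) \<noteq> p \<and> gk (nx (nx c)) = p)"
  by (cases c; cases p) auto
lemma z3_r: "xorp (gk i) (gk (nx i)) = gk j \<Longrightarrow> j = nx (nx i)"
  by (cases i; cases j) (auto simp: xorp_def)
lemma z3_l: "xorp (gk i) (gk (nx (nx i))) = gk j \<Longrightarrow> j = nx i"
  by (cases i; cases j) (auto simp: xorp_def)
lemma xorp_self: "xorp p p = (False, False)" by (simp add: xorp_def)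

context cg
begin

lemma F_one: assumes "d \<in> D" shows "\<exists>s. F d = {s}"
proof -
  have "card (F d) = 1" using F_k[OF assms] k_one by simp
  thus ?thesis by (simp add: card_1_singleton_iff)
qed

definition stt where "stt d = (THE s. (d, s) \<in> C)"

lemma stt_in: assumes "d \<in> D" shows "(d, stt d) \<in> C" "(d, s) \<in> C \<Longrightarrow> s = stt d"
proof -
  obtain s0 where s0: "F d = {s0}" using F_one[OF assms] by blast
  have u: "(d, s) \<in> C \<longleftrightarrow> s = s0" for s using s0 by (auto simp: F_def)
  have "stt d = s0" unfolding stt_def using u by simp
  thus "(d, stt d) \<in> C" "(d, s) \<in> C \<Longrightarrow> s = stt d" using u by auto
qed

lemma stt_sig: assumes "d \<in> D" shows "stt (sig d) = rr (stt d)"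
proof -
  have "sig2 (d, stt d) \<in> C" using sig2C stt_in(1)[OF assms] by blast
  hence "(sig d, rr (stt d)) \<in> C" by (simp add: sig2_def)
  thus ?thesis using stt_in(2)[OF sig_D[OF assms]] by simp
qed

lemma stt_alp: assumes "d \<in> D" shows "stt (alp d) = tt (stt d)"
proof -
  have "alp2 (d, stt d) \<in> C" using alp2C stt_in(1)[OF assms] by blast
  hence "(alp d, tt (stt d)) \<in> C" by (simp add: alp2_def)
  thus ?thesis using stt_in(2)[OF alp_D[OF assms]] by simp
qed

definition col where "col d = fst (stt d)"
definition pot where "pot d = snd (stt d)"

lemma col_rot: "E u w \<Longrightarrow> col (u, rho u w) = nx (col (u, w))"
  using stt_sig[of "(u, w)"] by (simp add: D_iff sig_uw col_def rr_def)
lemma pot_rot: "E u w \<Longrightarrow> pot (u, rho u w) = pot (u, w)"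
  using stt_sig[of "(u, w)"] by (simp add: D_iff sig_uw pot_def rr_def)
lemma col_sym: "E u w \<Longrightarrow> col (w, u) = col (u, w)"
  using stt_alp[of "(u, w)"] by (simp add: D_iff alp_def col_def tt_def)
lemma pot_sym: "E u w \<Longrightarrow> pot (w, u) = xorp (pot (u, w)) (gk (col (u, w)))"
  using stt_alp[of "(u, w)"] by (simp add: D_iff alp_def col_def pot_def tt_def)

lemma nb_cases:
  assumes "E u w" "E u z"
  shows "(z = w \<and> col (u, z) = col (u, w)) \<or>
         (z = rho u w \<and> col (u, z) = nx (col (u, w))) \<or>
         (z = rho u (rho u w) \<and> col (u, z) = nx (nx (col (u, w))))"
proof -
  have E1: "E u (rho u w)" using rot_props(1)[OF assms(1)] .
  have c1: "col (u, rho u w) = nx (col (u, w))" using col_rot[OF assms(1)] .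
  have c2: "col (u, rho u (rho u w)) = nx (nx (col (u, w)))" using col_rot[OF E1] c1 by simp
  show ?thesis using rot_props(6)[OF assms] c1 c2 by auto
qed

lemma col_inj: assumes "E u z" "E u z'" "col (u, z) = col (u, z')" shows "z = z'"
  using nb_cases[OF assms(1) assms(2)]
proof (elim disjE conjE)
  assume "z' = z" thus ?thesis by simp
next
  assume "col (u, z') = nx (col (u, z))"
  hence False using assms(3) nx_neq(1)[of "col (u, z)"] by metis
  thus ?thesis ..
next
  assume "col (u, z') = nx (nx (col (u, z)))"
  hence False using assms(3) nx_neq(2)[of "col (u, z)"] by metis
  thus ?thesis ..
qed

lemma pot_const: assumes "E u w" "E u z" shows "pot (u, z) = pot (u, w)"
proof -
  have E1: "E u (rho u w)" using rot_props(1)[OF assms(1)] .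
  have p1: "pot (u, rho u w) = pot (u, w)" using pot_rot[OF assms(1)] .
  have p2: "pot (u, rho u (rho u w)) = pot (u, w)" using pot_rot[OF E1] p1 by simp
  show ?thesis using rot_props(6)[OF assms] p1 p2 by auto
qed

definition PP where "PP u = pot (u, SOME w. E u w)"

lemma pot_PP: "E u w \<Longrightarrow> pot (u, w) = PP u"
  unfolding PP_def by (metis pot_const someI)

lemma PP_nb: "E u w \<Longrightarrow> PP w = xorp (PP u) (gk (col (u, w)))"
  using pot_sym pot_PP E_sym by metis

definition BB where "BB = {u \<in> V. PP u = (False, False)}"

lemma has_nb: "u \<in> V \<Longrightarrow> \<exists>w. E u w"
proof -
  assume u: "u \<in> V"
  have "card (nbrs E u) = 3" using nb3[OF u] .
  hence "nbrs E u \<noteq> {}" by auto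
  thus ?thesis by (auto simp: nbrs_def)
qed

lemma cond1: "x \<in> BB \<Longrightarrow> E x y \<Longrightarrow> y \<in> V - BB"
proof -
  assume x: "x \<in> BB" and E: "E x y"
  have "PP y = gk (col (x, y))" using PP_nb[OF E] x xorp_0 by (simp add: BB_def)
  thus ?thesis using gk_nz E_V[OF E] by (simp add: BB_def)
qed

lemma cond2: assumes "x \<in> V - BB" shows "card {y. E x y \<and> y \<in> BB} = 1"
proof -
  have xV: "x \<in> V" and nz: "PP x \<noteq> (False, False)" using assms by (auto simp: BB_def)
  obtain w where E: "E x w" using has_nb[OF xV] by blast
  have E1: "E x (rho x w)" using rot_props(1)[OF E] .
  have E2: "E x (rho x (rho x w))" using rot_props(1)[OF E1] .
  have memB: "y \<in> BB \<longleftrightarrow> gk (col (x, y)) = PP x" if "E x y" for y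
  proof -
    have "PP y = xorp (PP x) (gk (col (x, y)))" using PP_nb[OF that] .
    thus ?thesis using E_V[OF that] xorp_eq0 by (auto simp: BB_def)
  qed
  let ?c = "col (x, w)"
  have S: "{y. E x y \<and> y \<in> BB} = {y. E x y \<and> gk (col (x, y)) = PP x}" using memB by blast
  have c1: "col (x, rho x w) = nx ?c" using nb_cases[OF E E1] rot_props(2)[OF E] rot_props(4)[OF E] by auto
  have c2: "col (x, rho x (rho x w)) = nx (nx ?c)" using nb_cases[OF E E2] rot_props(3)[OF E] rot_props(4)[OF E] by auto
  have nbs: "E x y \<longleftrightarrow> y = w \<or> y = rho x w \<or> y = rho x (rho x w)" for y
    using rot_props(6)[OF E] E E1 E2 by auto
  from z3_one[OF nz, of ?c] show ?thesis
  proof (elim disjE conjE)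
    assume "gk ?c = PP x" "gk (nx ?c) \<noteq> PP x" "gk (nx (nx ?c)) \<noteq> PP x"
    hence "{y. E x y \<and> gk (col (x, y)) = PP x} = {w}" using nbs c1 c2 E by auto
    thus ?thesis using S by simp
  next
    assume "gk ?c \<noteq> PP x" "gk (nx ?c) = PP x" "gk (nx (nx ?c)) \<noteq> PP x"
    hence "{y. E x y \<and> gk (col (x, y)) = PP x} = {rho x w}" using nbs c1 c2 E by auto
    thus ?thesis using S by simp
  next
    assume "gk ?c \<noteq> PP x" "gk (nx ?c) \<noteq> PP x" "gk (nx (nx ?c)) = PP x"
    hence "{y. E x y \<and> gk (col (x, y)) = PP x} = {rho x (rho x w)}" using nbs c1 c2 E by auto
    thus ?thesis using S by simp
  qed
qed

lemma path_turns:
  assumes x: "x \<in> BB" and y: "y \<in> BB" and E: "E x a" "E a b" "E b y"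
  shows "(turns_left rho x a b \<and> turns_left rho a b y) \<or>
         (turns_right rho x a b \<and> turns_right rho a b y)"
proof -
  define i where "i = col (x, a)"
  define kk where "kk = col (a, b)"
  define j where "j = col (b, y)"
  have Px: "PP x = (False, False)" using x by (simp add: BB_def)
  have Py: "PP y = (False, False)" using y by (simp add: BB_def)
  have Pa: "PP a = gk i" using PP_nb[OF E(1)] Px xorp_0 i_def by simp
  have Pb: "PP b = xorp (gk i) (gk kk)" using PP_nb[OF E(2)] Pa kk_def by simp
  have "PP y = xorp (PP b) (gk j)" using PP_nb[OF E(3)] j_def by simp
  hence "xorp (PP b) (gk j) = (False, False)" using Py by simp
  hence Pbj: "PP b = gk j" using xorp_eq0 by blast
  have ik: "i \<noteq> kk"
  proof
    assume "i = kk"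
    hence "PP b = (False, False)" using Pb xorp_self by simp
    thus False using Pbj gk_nz by simp
  qed
  have Eax: "E a x" using E_sym[OF E(1)] .
  have Eba: "E b a" using E_sym[OF E(2)] .
  have cax: "col (a, x) = i" using col_sym[OF E(1)] i_def by simp
  have cba: "col (b, a) = kk" using col_sym[OF E(2)] kk_def by simp
  have xorj: "xorp (gk i) (gk kk) = gk j" using Pb Pbj by simp
  from nb_cases[OF Eax E(2)] show ?thesis
  proof (elim disjE conjE)
    assume "b = x" "col (a, b) = col (a, x)"
    thus ?thesis using ik cax kk_def by simp
  next
    assume b: "b = rho a x" and cb: "col (a, b) = nx (col (a, x))"
    have k1: "kk = nx i" using cb cax kk_def by simp
    have j1: "j = nx kk" using z3_r[of i j] xorj k1 by simp
    from nb_cases[OF Eba E(3)] have "y = rho b a"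
    proof (elim disjE conjE)
      assume "y = a" "col (b, y) = col (b, a)"
      thus ?thesis using j1 cba j_def nx_neq by metis
    next
      assume "y = rho b a" thus ?thesis .
    next
      assume "y = rho b (rho b a)" "col (b, y) = nx (nx (col (b, a)))"
      thus ?thesis using j1 cba j_def nx_neq by metis
    qed
    thus ?thesis using b by (simp add: turns_right_def)
  next
    assume b: "b = rho a (rho a x)" and cb: "col (a, b) = nx (nx (col (a, x)))"
    have k1: "kk = nx (nx i)" using cb cax kk_def by simp
    have j1: "j = nx (nx kk)" using z3_l[of i j] xorj k1 nx3 by simp
    from nb_cases[OF Eba E(3)] have "y = rho b (rho b a)"
    proof (elim disjE conjE)
      assume "y = a" "col (b, y) = col (b, a)"
      thus ?thesis using j1 cba j_def nx_neq by metis
    next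
      assume "y = rho b a" "col (b, y) = nx (col (b, a))"
      thus ?thesis using j1 cba j_def nx_neq by metis
    next
      assume "y = rho b (rho b a)" thus ?thesis .
    qed
    moreover have "rho a b = x" using b rot_props(5)[OF Eax] by simp
    moreover have "rho b (rho b (rho b a)) = a" using rot_props(5)[OF Eba] .
    ultimately show ?thesis by (simp add: turns_left_def)
  qed
qed

lemma dist3: assumes "x \<in> V" "y \<in> V" "graph_dist E x y = 3"
  shows "\<exists>a b. E x a \<and> E a b \<and> E b y"
proof -
  have "E\<^sup>*\<^sup>* x y" using conn assms(1,2) unfolding connected_graph_def by blast
  hence "\<exists>n. (E ^^ n) x y" using rtranclp_power by metis
  hence "(E ^^ (LEAST n. (E ^^ n) x y)) x y" by (rule LeastI_ex)
  hence "(E ^^ Suc (Suc (Suc 0))) x y" using assms(3) by (simp add: graph_dist_def numeral_3_eq_3)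
  then obtain a where a: "E x a" "(E ^^ Suc (Suc 0)) a y" using relpowp_Suc_D2 by metis
  then obtain b where b: "E a b" "(E ^^ Suc 0) b y" using relpowp_Suc_D2 by metis
  have "E b y" using b(2) by (simp add: relcompp_apply)
  thus ?thesis using a(1) b(1) by blast
qed

lemma main_thm:
  "\<exists>B \<subseteq> V.
           (\<forall>x\<in>B. \<forall>y. E x y \<longrightarrow> y \<in> V - B) \<and>
           (\<forall>x\<in>V - B. card {y. E x y \<and> y \<in> B} = 1) \<and>
           (\<forall>x\<in>B. \<forall>y\<in>B. graph_dist E x y = 3 \<longrightarrow>
              (\<exists>a b. E x a \<and> E a b \<and> E b y \<and>
                 ((turns_left rho x a b \<and> turns_left rho a b y) \<or>
                  (turns_right rho x a b \<and> turns_right rho a b y))))"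
proof (intro exI[of _ BB] conjI ballI allI impI)
  show "BB \<subseteq> V" by (auto simp: BB_def)
next
  fix x y assume "x \<in> BB" "E x y" thus "y \<in> V - BB" by (rule cond1)
next
  fix x assume "x \<in> V - BB" thus "card {y. E x y \<and> y \<in> BB} = 1" by (rule cond2)
next
  fix x y assume xy: "x \<in> BB" "y \<in> BB" "graph_dist E x y = 3"
  have "x \<in> V" "y \<in> V" using xy by (auto simp: BB_def)
  then obtain a b where ab: "E x a" "E a b" "E b y" using dist3 xy(3) by blast
  show "\<exists>a b. E x a \<and> E a b \<and> E b y \<and>
                 ((turns_left rho x a b \<and> turns_left rho a b y) \<or>
                  (turns_right rho x a b \<and> turns_right rho a b y))"
    using ab path_turns[OF xy(1,2) ab] by blast
qed

end

theorem proposition2p10: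
  fixes V :: "'v set" and E :: "'v \<Rightarrow> 'v \<Rightarrow> bool" and rho :: "'v \<Rightarrow> 'v \<Rightarrow> 'v"
  assumes "cubic_plane_graph V E rho"
    and "\<forall>f\<in>faces E rho. 3 dvd face_length f"
  shows "\<exists>B \<subseteq> V.
           (\<forall>x\<in>B. \<forall>y. E x y \<longrightarrow> y \<in> V - B) \<and>
           (\<forall>x\<in>V - B. card {y. E x y \<and> y \<in> B} = 1) \<and>
           (\<forall>x\<in>B. \<forall>y\<in>B. graph_dist E x y = 3 \<longrightarrow>
              (\<exists>a b. E x a \<and> E a b \<and> E b y \<and>
                 ((turns_left rho x a b \<and> turns_left rho a b y) \<or>
                  (turns_right rho x a b \<and> turns_right rho a b y))))"
proof -
  interpret cg V E rho
    using assms by unfold_locales (auto simp: cubic_plane_graph_def)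
  show ?thesis by (rule main_thm)
qed


end
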